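(* Let $\beta\in(0,1)$. There exists a constant $C_0>0$ (depending on $\beta$) such that for every $\gamma\in(\beta,2-\beta)$ and every $\epsilon\in(0,\frac12]$, \[ \inf_{M_\gamma}E^\gamma_\epsilon\le\frac{\pi\gamma^2}{2\log\frac1\delta}+\frac{C_0}{(\log\frac1\delta)^2},\qquad\delta=\epsilon\log\frac1\epsilon. \]
   Context: $B_1^+(0)=B_1(0)\cap\mathbb{R}^2_+$, $\partial^+B_1(0)=\partial B_1(0)\cap\mathbb{R}^2_+$. $M_\gamma=\{\mu\in W^{1,2}(-1,1):\mu(0)=1,\ \mu(\pm1)\le1-\gamma\}$. For $\mu\in M_\gamma$, $W^{1,2}_\mu(B_1^+(0))$ is the set of $w\in W^{1,2}(B_1^+(0))$ with $w(x_1,0)=\mu(x_1)$ on $(-1,1)$ and $w\le1-\gamma$ on $\partial^+B_1(0)$. $E^\gamma_\epsilon(\mu)=\frac\epsilon2\int_{-1}^1\frac{(\mu')^2}{1-\mu^2}dx_1+\frac12\inf_{w\in W^{1,2}_\mu(B_1^+(0))}\int_{B_1^+(0)}|\nabla w|^2dx$. *)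

theory Defs
  imports "HOL-Analysis.Analysis"
begin

definition half_disk :: "(real \<times> real) set" where
  "half_disk = {(x, y). x\<^sup>2 + y\<^sup>2 < 1 \<and> 0 < y}"

definition half_circle :: "(real \<times> real) set" where
  "half_circle = {(x, y). x\<^sup>2 + y\<^sup>2 = 1 \<and> 0 < y}"

text \<open>W^{1,2}(-1,1): mu is (on [-1,1]) an indefinite integral of some g in L^2(-1,1);
  g is then the (a.e. unique) derivative mu'.\<close>
definition W12_interval :: "(real \<Rightarrow> real) \<Rightarrow> (real \<Rightarrow> real) \<Rightarrow> bool" where
  "W12_interval \<mu> g \<longleftrightarrow>
     g \<in> borel_measurable lborel \<and>
     set_integrable lborel {-1..1} g \<and>
     set_integrable lborel {-1..1} (\<lambda>x. (g x)\<^sup>2) \<and>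
     (\<forall>x\<in>{-1..1}. \<mu> x = \<mu> (-1) + (LBINT t=-1..x. g t))"

text \<open>M_gamma (with the standing constraint |mu| <= 1, mu being a component of a unit vector).\<close>
definition M_gamma :: "real \<Rightarrow> (real \<Rightarrow> real) set" where
  "M_gamma \<gamma> = {\<mu>. (\<exists>g. W12_interval \<mu> g) \<and> \<mu> 0 = 1 \<and>
       \<mu> (-1) \<le> 1 - \<gamma> \<and> \<mu> 1 \<le> 1 - \<gamma> \<and> (\<forall>x\<in>{-1..1}. \<bar>\<mu> x\<bar> \<le> 1)}"

definition test_fun :: "(real \<times> real) set \<Rightarrow> (real \<times> real \<Rightarrow> real)
      \<Rightarrow> (real \<times> real \<Rightarrow> real) \<Rightarrow> (real \<times> real \<Rightarrow> real) \<Rightarrow> bool" where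
  "test_fun U \<phi> p1 p2 \<longleftrightarrow>
     continuous_on UNIV p1 \<and> continuous_on UNIV p2 \<and>
     (\<forall>z. (\<phi> has_derivative (\<lambda>h. p1 z * fst h + p2 z * snd h)) (at z)) \<and>
     (\<exists>K. compact K \<and> K \<subseteq> U \<and> (\<forall>z. z \<notin> K \<longrightarrow> \<phi> z = 0))"

definition W12_2d :: "(real \<times> real) set \<Rightarrow> (real \<times> real \<Rightarrow> real)
      \<Rightarrow> (real \<times> real \<Rightarrow> real) \<Rightarrow> (real \<times> real \<Rightarrow> real) \<Rightarrow> bool" where
  "W12_2d U w G1 G2 \<longleftrightarrow>
     w \<in> borel_measurable lebesgue \<and> G1 \<in> borel_measurable lebesgue \<and>
     G2 \<in> borel_measurable lebesgue \<and>
     set_integrable lebesgue U (\<lambda>z. (w z)\<^sup>2) \<and>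
     set_integrable lebesgue U (\<lambda>z. (G1 z)\<^sup>2) \<and>
     set_integrable lebesgue U (\<lambda>z. (G2 z)\<^sup>2) \<and>
     (\<forall>\<phi> p1 p2. test_fun U \<phi> p1 p2 \<longrightarrow>
        (LINT z:U|lebesgue. w z * p1 z) = - (LINT z:U|lebesgue. G1 z * \<phi> z) \<and>
        (LINT z:U|lebesgue. w z * p2 z) = - (LINT z:U|lebesgue. G2 z * \<phi> z))"

text \<open>W^{1,2}_mu(B_1^+): trace mu on the flat part, trace <= 1-gamma on the arc.  Traces are
  expressed through limits along vertical (resp. radial) segments, valid for a.e. line.\<close>
definition W12_mu :: "real \<Rightarrow> (real \<Rightarrow> real)
      \<Rightarrow> ((real \<times> real \<Rightarrow> real) \<times> (real \<times> real \<Rightarrow> real) \<times> (real \<times> real \<Rightarrow> real)) set" where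
  "W12_mu \<gamma> \<mu> = {(w, G1, G2). W12_2d half_disk w G1 G2 \<and>
     (AE x in lborel. x \<in> {-1<..<1} \<longrightarrow>
        ((\<lambda>t. w (x, t)) \<longlongrightarrow> \<mu> x) (at_right 0)) \<and>
     (AE \<theta> in lborel. \<theta> \<in> {0<..<pi} \<longrightarrow>
        (\<exists>L. ((\<lambda>r. w (r * cos \<theta>, r * sin \<theta>)) \<longlongrightarrow> L) (at_left 1) \<and> L \<le> 1 - \<gamma>))}"

definition energy :: "real \<Rightarrow> real \<Rightarrow> (real \<Rightarrow> real) \<Rightarrow> ennreal" where
  "energy \<gamma> \<epsilon> \<mu> =
     ennreal (\<epsilon> / 2) *
       (INF g\<in>{g. W12_interval \<mu> g}.
          \<integral>\<^sup>+ x\<in>{-1<..<1}. ennreal ((g x)\<^sup>2 / (1 - (\<mu> x)\<^sup>2)) \<partial>lborel)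
     + ennreal (1 / 2) *
       (INF (w, G1, G2)\<in>W12_mu \<gamma> \<mu>.
          \<integral>\<^sup>+ z\<in>half_disk. ennreal ((G1 z)\<^sup>2 + (G2 z)\<^sup>2) \<partial>lebesgue)"

end

theory Submission
  imports Defs
begin


lemma deriv_paste:
  fixes A B :: "real \<Rightarrow> real"
  assumes "x \<le> c \<Longrightarrow> (A has_real_derivative DA) (at x)"
      and "x \<ge> c \<Longrightarrow> (B has_real_derivative DB) (at x)"
      and "x = c \<Longrightarrow> A c = B c \<and> DA = DB"
  shows "((\<lambda>r. if r \<le> c then A r else B r) has_real_derivative (if x \<le> c then DA else DB)) (at x)"
proof -
  let ?f = "\<lambda>r. if r \<le> c then A r else B r"
  consider "x < c" | "x > c" | "x = c" by linarith
  then show ?thesis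
  proof cases
    case 1
    have ev: "eventually (\<lambda>r. r \<in> {..<c}) (nhds x)"
      using 1 by (intro eventually_nhds_in_open) auto
    have "(A has_real_derivative DA) (at x)" using assms 1 by auto
    moreover have "eventually (\<lambda>r. ?f r = A r) (nhds x)"
      using ev by eventually_elim auto
    ultimately show ?thesis using 1
      by (subst DERIV_cong_ev[where g = A and y = x and v = DA]) auto
  next
    case 2
    have ev: "eventually (\<lambda>r. r \<in> {c<..}) (nhds x)"
      using 2 by (intro eventually_nhds_in_open) auto
    have "(B has_real_derivative DB) (at x)" using assms 2 by auto
    moreover have "eventually (\<lambda>r. ?f r = B r) (nhds x)"
      using ev by eventually_elim auto
    ultimately show ?thesis using 2
      by (subst DERIV_cong_ev[where g = B and y = x and v = DB]) auto
  next
    case 3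
    then have dA: "(A has_real_derivative DA) (at c)" and dB: "(B has_real_derivative DA) (at c)"
      and eq: "A c = B c" using assms by auto
    have lA: "((\<lambda>y. (A y - A c) / (y - c)) \<longlongrightarrow> DA) (at c)"
      using dA by (simp add: has_field_derivative_iff)
    have lB: "((\<lambda>y. (B y - B c) / (y - c)) \<longlongrightarrow> DA) (at c)"
      using dB by (simp add: has_field_derivative_iff)
    have "((\<lambda>y. (?f y - ?f c) / (y - c)) \<longlongrightarrow> DA) (at_left c)"
    proof -
      have "((\<lambda>y. (A y - A c) / (y - c)) \<longlongrightarrow> DA) (at_left c)"
        using lA by (simp add: filterlim_at_split)
      moreover have "eventually (\<lambda>y. (A y - A c) / (y - c) = (?f y - ?f c) / (y - c)) (at_left c)"
        by (auto simp: eventually_at_left_field intro!: exI[of _ "c - 1"])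
      ultimately show ?thesis using Lim_transform_eventually by fastforce
    qed
    moreover have "((\<lambda>y. (?f y - ?f c) / (y - c)) \<longlongrightarrow> DA) (at_right c)"
    proof -
      have "((\<lambda>y. (B y - B c) / (y - c)) \<longlongrightarrow> DA) (at_right c)"
        using lB by (simp add: filterlim_at_split)
      moreover have "eventually (\<lambda>y. (B y - B c) / (y - c) = (?f y - ?f c) / (y - c)) (at_right c)"
        using eq by (auto simp: eventually_at_right_field intro!: exI[of _ "c + 1"])
      ultimately show ?thesis using Lim_transform_eventually by fastforce
    qed
    ultimately have "((\<lambda>y. (?f y - ?f c) / (y - c)) \<longlongrightarrow> DA) (at c)"
      by (simp add: filterlim_at_split)
    then show ?thesis using 3 by (simp add: has_field_derivative_iff)
  qed
qed

lemma cont_paste: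
  fixes A B :: "real \<Rightarrow> real"
  assumes "x \<le> c \<Longrightarrow> isCont A x"
      and "x \<ge> c \<Longrightarrow> isCont B x"
      and "x = c \<Longrightarrow> A c = B c"
  shows "isCont (\<lambda>r. if r \<le> c then A r else B r) x"
proof -
  let ?f = "\<lambda>r. if r \<le> c then A r else B r"
  consider "x < c" | "x > c" | "x = c" by linarith
  then show ?thesis
  proof cases
    case 1
    have ev: "eventually (\<lambda>r. r \<in> {..<c}) (nhds x)"
      using 1 by (intro eventually_nhds_in_open) auto
    have "eventually (\<lambda>r. ?f r = A r) (nhds x)"
      using ev by eventually_elim auto
    then show ?thesis using assms 1 by (subst isCont_cong) auto
  next
    case 2
    have ev: "eventually (\<lambda>r. r \<in> {c<..}) (nhds x)"
      using 2 by (intro eventually_nhds_in_open) auto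
    have "eventually (\<lambda>r. ?f r = B r) (nhds x)"
      using ev by eventually_elim auto
    then show ?thesis using assms 2 by (subst isCont_cong) auto
  next
    case 3
    have "continuous (at_left c) ?f"
    proof -
      have "continuous (at_left c) A" using assms 3 by (simp add: continuous_at_split)
      then have "(A \<longlongrightarrow> ?f c) (at_left c)" by (simp add: continuous_within)
      moreover have "eventually (\<lambda>y. A y = ?f y) (at_left c)"
        by (auto simp: eventually_at_left_field intro!: exI[of _ "c - 1"])
      ultimately show ?thesis unfolding continuous_within
        using Lim_transform_eventually by fastforce
    qed
    moreover have "continuous (at_right c) ?f"
    proof -
      have "continuous (at_right c) B" using assms 3 by (simp add: continuous_at_split)
      then have "(B \<longlongrightarrow> ?f c) (at_right c)" using assms 3 by (simp add: continuous_within)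
      moreover have "eventually (\<lambda>y. B y = ?f y) (at_right c)"
        by (auto simp: eventually_at_right_field intro!: exI[of _ "c + 1"])
      ultimately show ?thesis unfolding continuous_within
        using Lim_transform_eventually by fastforce
    qed
    ultimately show ?thesis using 3 by (simp add: continuous_at_split)
  qed
qed


lemma integral_line_zero:
  fixes F F' :: "real \<Rightarrow> real"
  assumes d: "\<And>x. (F has_real_derivative F' x) (at x)"
    and c: "continuous_on UNIV F'"
    and z: "\<And>x. R < \<bar>x\<bar> \<Longrightarrow> F x = 0 \<and> F' x = 0"
    and R: "0 \<le> R"
  shows "integral\<^sup>L lborel F' = 0"
proof -
  have eq: "F' = (\<lambda>x. indicator {-(R+1)..R+1} x *\<^sub>R F' x)"
  proof
    fix x show "F' x = indicator {-(R+1)..R+1} x *\<^sub>R F' x"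
    proof (cases "R < \<bar>x\<bar>")
      case True then show ?thesis using z by simp
    next
      case False then have "x \<in> {-(R+1)..R+1}" by auto
      then show ?thesis by simp
    qed
  qed
  have "integral\<^sup>L lborel (\<lambda>x. indicator {-(R+1)..R+1} x *\<^sub>R F' x) = F (R+1) - F (-(R+1))"
    apply (rule integral_FTC_atLeastAtMost)
    using R apply simp
    using d apply (simp add: has_real_derivative_iff_has_vector_derivative[symmetric] has_field_derivative_at_within)
    using c continuous_on_subset by blast
  also have "\<dots> = 0" using z[of "R+1"] z[of "-(R+1)"] R by simp
  finally show ?thesis using arg_cong[OF eq, of "integral\<^sup>L lborel"] by simp
qed

lemma test_fun_p_zero:
  assumes tf: "test_fun U \<phi> p1 p2" and K: "compact K" "\<forall>z. z \<notin> K \<longrightarrow> \<phi> z = 0" and zK: "z \<notin> K"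
  shows "p1 z = 0 \<and> p2 z = 0"
proof -
  have o: "open (- K)" using K compact_imp_closed by blast
  have d: "(\<phi> has_derivative (\<lambda>h. p1 z * fst h + p2 z * snd h)) (at z)"
    using tf unfolding test_fun_def by blast
  have d0: "(\<phi> has_derivative (\<lambda>h. 0)) (at z)"
  proof -
    have "((\<lambda>_. 0::real) has_derivative (\<lambda>h. 0)) (at z)" by simp
    then show ?thesis
      apply (rule has_derivative_transform_within_open[OF _ o])
      using zK K by auto
  qed
  have "(\<lambda>h. p1 z * fst h + p2 z * snd h) = (\<lambda>h. 0)"
    using has_derivative_unique[OF d d0] .
  from fun_cong[OF this, of "(1,0)"] fun_cong[OF this, of "(0,1)"] show ?thesis by simp
qed

lemma weak_deriv:
  fixes w W1 W2 :: "real \<times> real \<Rightarrow> real"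
  assumes dw: "\<And>z. (w has_derivative (\<lambda>h. W1 z * fst h + W2 z * snd h)) (at z)"
    and c1: "continuous_on UNIV W1" and c2: "continuous_on UNIV W2"
    and tf: "test_fun U \<phi> p1 p2"
  shows "(LINT z:U|lebesgue. w z * p1 z) = - (LINT z:U|lebesgue. W1 z * \<phi> z) \<and>
         (LINT z:U|lebesgue. w z * p2 z) = - (LINT z:U|lebesgue. W2 z * \<phi> z)"
proof -
  obtain K where K: "compact K" "K \<subseteq> U" "\<forall>z. z \<notin> K \<longrightarrow> \<phi> z = 0"
    using tf unfolding test_fun_def by blast
  have dphi: "\<And>z. (\<phi> has_derivative (\<lambda>h. p1 z * fst h + p2 z * snd h)) (at z)"
    and cp1: "continuous_on UNIV p1" and cp2: "continuous_on UNIV p2"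
    using tf unfolding test_fun_def by blast+
  have pz: "\<And>z. z \<notin> K \<Longrightarrow> p1 z = 0 \<and> p2 z = 0"
    using test_fun_p_zero[OF tf K(1) K(3)] by blast
  have cw: "continuous_on UNIV w"
    using has_derivative_continuous[OF dw] by (simp add: continuous_on_eq_continuous_at)
  have cphi: "continuous_on UNIV \<phi>"
    using has_derivative_continuous[OF dphi] by (simp add: continuous_on_eq_continuous_at)
  obtain R0 where R0: "\<And>z. z \<in> K \<Longrightarrow> norm z \<le> R0"
    using compact_imp_bounded[OF K(1)] unfolding bounded_iff by blast
  define R where "R = max R0 0"
  have R: "0 \<le> R" "\<And>z. z \<in> K \<Longrightarrow> norm z \<le> R"
    using R0 unfolding R_def by force+
  have fstR: "\<bar>fst z\<bar> \<le> R" if "z \<in> K" for z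
  proof -
    have "\<bar>fst z\<bar> \<le> norm z" using norm_fst_le[of "fst z" "snd z"] by simp
    then show ?thesis using R(2)[OF that] by linarith
  qed
  have sndR: "\<bar>snd z\<bar> \<le> R" if "z \<in> K" for z
  proof -
    have "\<bar>snd z\<bar> \<le> norm z" using norm_snd_le[of "snd z" "fst z"] by simp
    then show ?thesis using R(2)[OF that] by linarith
  qed
  define h where "h z = w z * \<phi> z" for z
  have dh: "(h has_derivative (\<lambda>k. w z * (p1 z * fst k + p2 z * snd k) + (W1 z * fst k + W2 z * snd k) * \<phi> z)) (at z)" for z
    unfolding h_def by (rule has_derivative_mult[OF dw dphi])
  define D1 where "D1 z = w z * p1 z + W1 z * \<phi> z" for z
  define D2 where "D2 z = w z * p2 z + W2 z * \<phi> z" for z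
  have cD1: "continuous_on UNIV D1" unfolding D1_def
    by (intro continuous_intros cw cp1 c1 cphi)
  have cD2: "continuous_on UNIV D2" unfolding D2_def
    by (intro continuous_intros cw cp2 c2 cphi)
  have D1z: "\<And>z. z \<notin> K \<Longrightarrow> D1 z = 0" and D2z: "\<And>z. z \<notin> K \<Longrightarrow> D2 z = 0"
    and hz: "\<And>z. z \<notin> K \<Longrightarrow> h z = 0"
    using pz K(3) by (auto simp: D1_def D2_def h_def)
  have indK: "\<And>F z. (\<And>z. z \<notin> K \<Longrightarrow> F z = (0::real)) \<Longrightarrow> F z = indicator K z *\<^sub>R F z"
    by (auto simp: indicator_def)
  have intK: "\<And>F. continuous_on UNIV F \<Longrightarrow> (\<And>z. z \<notin> K \<Longrightarrow> F z = (0::real)) \<Longrightarrow> integrable lborel F"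
  proof -
    fix F :: "real \<times> real \<Rightarrow> real" assume cF: "continuous_on UNIV F" and F0: "\<And>z. z \<notin> K \<Longrightarrow> F z = 0"
    have "integrable lborel (\<lambda>z. indicator K z *\<^sub>R F z)"
      by (rule borel_integrable_compact[OF K(1)]) (use cF continuous_on_subset in blast)
    moreover have "(\<lambda>z. indicator K z *\<^sub>R F z) = F" using F0 by (intro ext) (auto simp: indicator_def)
    ultimately show "integrable lborel F" by simp
  qed
  have bor: "\<And>F::real\<times>real\<Rightarrow>real. continuous_on UNIV F \<Longrightarrow> F \<in> borel_measurable borel"
    by (rule borel_measurable_continuous_onI)
  have conv: "(LINT z:U|lebesgue. F z) = integral\<^sup>L lborel F"
    if cF: "continuous_on UNIV F" and F0: "\<And>z. z \<notin> K \<Longrightarrow> F z = (0::real)" for F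
  proof -
    have "(\<lambda>z. indicator U z *\<^sub>R F z) = F"
      using F0 K(2) by (intro ext) (auto simp: indicator_def)
    then have "(LINT z:U|lebesgue. F z) = integral\<^sup>L lebesgue F"
      by (simp add: set_lebesgue_integral_def)
    also have "\<dots> = integral\<^sup>L lborel F"
      by (rule integral_completion) (use bor[OF cF] in simp)
    finally show ?thesis .
  qed
  have i1: "(LINT z:U|lebesgue. w z * p1 z) = integral\<^sup>L lborel (\<lambda>z. w z * p1 z)"
    by (rule conv) (auto intro!: continuous_intros cw cp1 simp: pz)
  have i2: "(LINT z:U|lebesgue. w z * p2 z) = integral\<^sup>L lborel (\<lambda>z. w z * p2 z)"
    by (rule conv) (auto intro!: continuous_intros cw cp2 simp: pz)
  have i3: "(LINT z:U|lebesgue. W1 z * \<phi> z) = integral\<^sup>L lborel (\<lambda>z. W1 z * \<phi> z)"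
    by (rule conv) (auto intro!: continuous_intros c1 cphi simp: K(3))
  have i4: "(LINT z:U|lebesgue. W2 z * \<phi> z) = integral\<^sup>L lborel (\<lambda>z. W2 z * \<phi> z)"
    by (rule conv) (auto intro!: continuous_intros c2 cphi simp: K(3))
  have int_a: "integrable lborel (\<lambda>z. w z * p1 z)" "integrable lborel (\<lambda>z. w z * p2 z)"
    "integrable lborel (\<lambda>z. W1 z * \<phi> z)" "integrable lborel (\<lambda>z. W2 z * \<phi> z)"
    by (rule intK; auto intro!: continuous_intros cw cp1 cp2 c1 c2 cphi simp: pz K(3))+
  have intD1: "integrable lborel D1" by (rule intK[OF cD1 D1z])
  have intD2: "integrable lborel D2" by (rule intK[OF cD2 D2z])
  have dx: "((\<lambda>x. h (x, y)) has_real_derivative D1 (x, y)) (at x)" for x y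
  proof -
    have "((\<lambda>x. (x, y)) has_derivative (\<lambda>k. (k, 0))) (at x)"
      by (auto intro!: derivative_eq_intros)
    from has_derivative_compose[OF this dh]
    have "((\<lambda>x. h (x, y)) has_derivative (\<lambda>k. k * D1 (x,y))) (at x)"
      by (simp add: D1_def algebra_simps)
    then show ?thesis by (simp add: has_field_derivative_def mult_commute_abs)
  qed
  have dy: "((\<lambda>y. h (x, y)) has_real_derivative D2 (x, y)) (at y)" for x y
  proof -
    have "((\<lambda>y. (x, y)) has_derivative (\<lambda>k. (0, k))) (at y)"
      by (auto intro!: derivative_eq_intros)
    from has_derivative_compose[OF this dh]
    have "((\<lambda>y. h (x, y)) has_derivative (\<lambda>k. k * D2 (x,y))) (at y)"
      by (simp add: D2_def algebra_simps)
    then show ?thesis by (simp add: has_field_derivative_def mult_commute_abs)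
  qed
  have cD1l: "continuous_on UNIV (\<lambda>x. D1 (x, y))" for y
    by (rule continuous_on_compose2[OF cD1]) (auto intro!: continuous_intros)
  have cD2l: "continuous_on UNIV (\<lambda>y. D2 (x, y))" for x
    by (rule continuous_on_compose2[OF cD2]) (auto intro!: continuous_intros)
  have zero1: "integral\<^sup>L lborel (\<lambda>x. D1 (x, y)) = 0" for y
  proof (rule integral_line_zero[OF dx cD1l _ R(1)])
    fix x assume "R < \<bar>x\<bar>"
    then have "(x, y) \<notin> K" using fstR[of "(x,y)"] by auto
    then show "h (x, y) = 0 \<and> D1 (x, y) = 0" using hz D1z by blast
  qed
  have zero2: "integral\<^sup>L lborel (\<lambda>y. D2 (x, y)) = 0" for x
  proof (rule integral_line_zero[OF dy cD2l _ R(1)])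
    fix y assume "R < \<bar>y\<bar>"
    then have "(x, y) \<notin> K" using sndR[of "(x,y)"] by auto
    then show "h (x, y) = 0 \<and> D2 (x, y) = 0" using hz D2z by blast
  qed
  have intD1': "integrable (lborel \<Otimes>\<^sub>M lborel) (\<lambda>(x, y). D1 (x, y))"
    using intD1 by (simp add: lborel_prod)
  have intD2': "integrable (lborel \<Otimes>\<^sub>M lborel) (\<lambda>(x, y). D2 (x, y))"
    using intD2 by (simp add: lborel_prod)
  have "integral\<^sup>L lborel D1 = 0"
  proof -
    have "integral\<^sup>L lborel D1 = integral\<^sup>L (lborel \<Otimes>\<^sub>M lborel) (\<lambda>(x, y). D1 (x, y))"
      by (simp add: lborel_prod)
    also have "\<dots> = (\<integral>y. (\<integral>x. D1 (x, y) \<partial>lborel) \<partial>lborel)"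
      using lborel_pair.integral_snd[OF intD1'] by simp
    finally show ?thesis using zero1 by simp
  qed
  moreover have "integral\<^sup>L lborel D2 = 0"
  proof -
    have "integral\<^sup>L lborel D2 = integral\<^sup>L (lborel \<Otimes>\<^sub>M lborel) (\<lambda>(x, y). D2 (x, y))"
      by (simp add: lborel_prod)
    also have "\<dots> = (\<integral>x. (\<integral>y. D2 (x, y) \<partial>lborel) \<partial>lborel)"
      using lborel_pair.integral_fst[OF intD2'] by simp
    finally show ?thesis using zero2 by simp
  qed
  ultimately have "integral\<^sup>L lborel (\<lambda>z. w z * p1 z) + integral\<^sup>L lborel (\<lambda>z. W1 z * \<phi> z) = 0"
     "integral\<^sup>L lborel (\<lambda>z. w z * p2 z) + integral\<^sup>L lborel (\<lambda>z. W2 z * \<phi> z) = 0"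
    unfolding D1_def D2_def using Bochner_Integration.integral_add[OF int_a(1) int_a(3)]
      Bochner_Integration.integral_add[OF int_a(2) int_a(4)] by simp_all
  then show ?thesis unfolding i1 i2 i3 i4 by linarith
qed


lemma nnFTC:
  fixes f F :: "real \<Rightarrow> real"
  assumes ab: "a \<le> b"
    and d: "\<And>x. a \<le> x \<Longrightarrow> x \<le> b \<Longrightarrow> (F has_real_derivative f x) (at x)"
    and c: "continuous_on {a..b} f"
    and nn: "\<And>x. a \<le> x \<Longrightarrow> x \<le> b \<Longrightarrow> 0 \<le> f x"
  shows "(\<integral>\<^sup>+x. ennreal (f x) * indicator {a..b} x \<partial>lborel) = ennreal (F b - F a)"
proof -
  have int: "integrable lborel (\<lambda>x. indicator {a..b} x *\<^sub>R f x)"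
    using borel_integrable_atLeastAtMost'[OF c] unfolding set_integrable_def .
  have I: "integral\<^sup>L lborel (\<lambda>x. indicator {a..b} x *\<^sub>R f x) = F b - F a"
    apply (rule integral_FTC_atLeastAtMost[OF ab _ c])
    using d by (simp add: has_real_derivative_iff_has_vector_derivative[symmetric] has_field_derivative_at_within)
  have "(\<integral>\<^sup>+x. ennreal (indicator {a..b} x *\<^sub>R f x) \<partial>lborel) = ennreal (F b - F a)"
    using nn_integral_eq_integral[OF int] I nn by (auto simp: indicator_def)
  moreover have "\<And>x. ennreal (indicator {a..b} x *\<^sub>R f x) = ennreal (f x) * indicator {a..b} x"
    by (auto simp: indicator_def)
  ultimately show ?thesis by simp
qed

lemma lborel_refl: "distr lborel borel (\<lambda>(x, y). (x, - y)) = (lborel :: (real \<times> real) measure)"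
proof -
  have "distr lborel borel (\<lambda>x::real. x) \<Otimes>\<^sub>M distr lborel borel (uminus :: real \<Rightarrow> real)
        = distr (lborel \<Otimes>\<^sub>M lborel) (borel \<Otimes>\<^sub>M borel) (\<lambda>(x, y). (x, - y))"
    by (rule pair_measure_distr) (auto simp: lborel_distr_uminus intro: lborel.sigma_finite_measure_axioms)
  moreover have "distr lborel borel (\<lambda>x::real. x) = lborel"
    by (rule distr_id2) simp
  ultimately show ?thesis
    by (simp add: lborel_distr_uminus lborel_prod borel_prod)
qed

lemma null_axis: "{z::real\<times>real. snd z = 0} \<in> null_sets lborel"
proof -
  have "{z::real\<times>real. snd z = 0} = UNIV \<times> {0}" by auto
  moreover have "emeasure (lborel \<Otimes>\<^sub>M lborel) (UNIV \<times> {0::real}) = (0::ennreal)"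
    by (subst lborel.emeasure_pair_measure_Times) auto
  moreover have "closed (UNIV \<times> {0::real})" by (intro closed_Times) auto
  ultimately show ?thesis by (simp add: lborel_prod[symmetric] null_sets_def borel_closed)
qed

lemma half_meas:
  assumes S: "S \<in> sets (borel :: (real \<times> real) measure)"
    and sym: "\<And>x y. (x, y) \<in> S \<longleftrightarrow> (x, - y) \<in> S"
  shows "emeasure lborel S = 2 * emeasure lborel (S \<inter> {z. 0 < snd z})"
proof -
  let ?P = "S \<inter> {z. 0 < snd z}" and ?N = "S \<inter> {z. snd z < 0}" and ?Z = "S \<inter> {z. snd z = 0}"
  have o1: "open {z::real\<times>real. 0 < snd z}" by (intro open_Collect_less continuous_intros)
  have o2: "open {z::real\<times>real. snd z < 0}" by (intro open_Collect_less continuous_intros)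
  have o3: "closed {z::real\<times>real. snd z = 0}" by (intro closed_Collect_eq continuous_intros)
  have mP: "?P \<in> sets lborel" using S o1 by (simp add: borel_open sets.Int)
  have mN: "?N \<in> sets lborel" using S o2 by (simp add: borel_open sets.Int)
  have mZ: "?Z \<in> sets lborel" using S o3 by (simp add: borel_closed sets.Int)
  have Z0: "emeasure lborel ?Z = 0"
    using null_axis by (metis (no_types, lifting) Int_lower2 mZ null_sets_subset null_setsD1)
  have "(\<lambda>(x, y). (x, - y)) -` ?P \<inter> space lborel = (?N :: (real\<times>real) set)"
    using sym by auto
  have eqr: "(\<lambda>(x, y). (x, - y)) = (\<lambda>z::real\<times>real. (fst z, - snd z))" by auto
  have mr: "(\<lambda>(x, y). (x, - y)) \<in> borel_measurable (borel::(real\<times>real) measure)"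
    unfolding eqr by (rule borel_measurable_continuous_onI) (intro continuous_intros)
  then have "emeasure lborel ?N = emeasure (distr lborel borel (\<lambda>(x, y). (x, - y))) ?P"
    using mP \<open>(\<lambda>(x, y). (x, - y)) -` ?P \<inter> space lborel = ?N\<close> by (subst emeasure_distr) auto
  then have NP: "emeasure lborel ?N = emeasure lborel ?P" by (simp add: lborel_refl)
  have Seq: "S = (?P \<union> ?N) \<union> ?Z" by auto
  have disj: "(?P \<union> ?N) \<inter> ?Z = {}" by auto
  have "emeasure lborel S = emeasure lborel ((?P \<union> ?N) \<union> ?Z)" by (rule arg_cong[OF Seq])
  also have "\<dots> = emeasure lborel (?P \<union> ?N) + emeasure lborel ?Z"
    by (rule plus_emeasure[symmetric]) (use mP mN mZ disj in auto)
  also have "emeasure lborel (?P \<union> ?N) = emeasure lborel ?P + emeasure lborel ?N"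
    using mP mN by (intro plus_emeasure[symmetric]) auto
  finally show ?thesis using Z0 NP by (simp add: mult_2)
qed

lemma norm_pair_eq: "norm (x::real, y::real) = sqrt (x\<^sup>2 + y\<^sup>2)"
  by (simp add: norm_Pair)

lemma half_ball: "0 \<le> r \<Longrightarrow> emeasure lborel (ball (0::real\<times>real) r \<inter> {z. 0 < snd z}) = ennreal (pi * r\<^sup>2 / 2)"
proof -
  assume r: "0 \<le> r"
  have A: "emeasure lborel (ball (0::real\<times>real) r) = 2 * emeasure lborel (ball (0::real\<times>real) r \<inter> {z. 0 < snd z})"
    by (rule half_meas) (auto simp: norm_pair_eq)
  have B: "emeasure lborel (ball (0::real\<times>real) r) = ennreal (pi * r\<^sup>2)"
    using emeasure_ball[OF r, of "0::real\<times>real"] by (simp add: unit_ball_vol_2 power2_eq_square)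
  have C: "ennreal (pi * r\<^sup>2) = ennreal 2 * ennreal (pi * r\<^sup>2 / 2)"
    by (rule trans[OF _ ennreal_mult]) auto
  have "2 * emeasure lborel (ball (0::real\<times>real) r \<inter> {z. 0 < snd z}) = ennreal 2 * ennreal (pi * r\<^sup>2 / 2)"
    using A B C by metis
  then show ?thesis by (simp add: ennreal_mult_cancel_left)
qed

lemma half_cball: "0 \<le> r \<Longrightarrow> emeasure lborel (cball (0::real\<times>real) r \<inter> {z. 0 < snd z}) = ennreal (pi * r\<^sup>2 / 2)"
proof -
  assume r: "0 \<le> r"
  have A: "emeasure lborel (cball (0::real\<times>real) r) = 2 * emeasure lborel (cball (0::real\<times>real) r \<inter> {z. 0 < snd z})"
    by (rule half_meas) (auto simp: norm_pair_eq)
  have B: "emeasure lborel (cball (0::real\<times>real) r) = ennreal (pi * r\<^sup>2)"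
    using emeasure_cball[OF r, of "0::real\<times>real"] by (simp add: unit_ball_vol_2 power2_eq_square)
  have C: "ennreal (pi * r\<^sup>2) = ennreal 2 * ennreal (pi * r\<^sup>2 / 2)"
    by (rule trans[OF _ ennreal_mult]) auto
  have "2 * emeasure lborel (cball (0::real\<times>real) r \<inter> {z. 0 < snd z}) = ennreal 2 * ennreal (pi * r\<^sup>2 / 2)"
    using A B C by metis
  then show ?thesis by (simp add: ennreal_mult_cancel_left)
qed


lemma half_disk_eq: "half_disk = ball (0::real\<times>real) 1 \<inter> {z. 0 < snd z}"
  by (auto simp: half_disk_def norm_pair_eq)

lemma half_disk_open: "open half_disk"
proof -
  have "open {z::real\<times>real. 0 < snd z}" by (intro open_Collect_less continuous_intros)
  then show ?thesis unfolding half_disk_eq by (intro open_Int) auto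
qed

lemma half_disk_meas: "emeasure lborel half_disk = ennreal (pi / 2)"
  using half_ball[of 1] unfolding half_disk_eq by simp

lemma radial_key:
  "distr (density lborel (indicator half_disk)) borel (norm :: real\<times>real \<Rightarrow> real)
     = density lborel (\<lambda>r. ennreal (pi * r) * indicator {0..1} r)"
proof (rule measure_eqI_lessThan)
  let ?H = "half_disk" and ?g = "\<lambda>r::real. ennreal (pi * r) * indicator {0..1} r"
  have Hs: "?H \<in> sets lborel" using half_disk_open by simp
  have gm: "?g \<in> borel_measurable borel" by measurable
  have E: "emeasure (distr (density lborel (indicator ?H)) borel norm) {x<..} = emeasure lborel (?H \<inter> {z. x < norm z})" for x
  proof -
    have o: "open {z::real\<times>real. x < norm z}" by (intro open_Collect_less continuous_intros)
    have "norm -` {x<..} \<inter> space (density lborel (indicator ?H)) = {z::real\<times>real. x < norm z}" by auto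
    then have "emeasure (distr (density lborel (indicator ?H)) borel norm) {x<..} =
       emeasure (density lborel (indicator ?H)) {z::real\<times>real. x < norm z}"
      by (subst emeasure_distr) auto
    also have "\<dots> = emeasure lborel (?H \<inter> {z. x < norm z})"
      by (rule emeasure_restricted) (use Hs o in auto)
    finally show ?thesis .
  qed
  show "sets (distr (density lborel (indicator ?H)) borel (norm :: real\<times>real \<Rightarrow> real)) = sets borel" by simp
  show "sets (density lborel ?g) = sets borel" by simp
  show "emeasure (distr (density lborel (indicator ?H)) borel norm) {x<..} < \<infinity>" for x
  proof -
    have "emeasure lborel (?H \<inter> {z. x < norm z}) \<le> emeasure lborel ?H"
      by (rule emeasure_mono) (use Hs in auto)
    then show ?thesis unfolding E using half_disk_meas by (simp add: le_less_trans)
  qed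
  show "emeasure (distr (density lborel (indicator ?H)) borel norm) {x<..} = emeasure (density lborel ?g) {x<..}" for x
  proof -
    have R: "emeasure (density lborel ?g) {x<..} = (\<integral>\<^sup>+ r. ?g r * indicator {x<..} r \<partial>lborel)"
      by (rule emeasure_density) (use gm in auto)
    have d1: "\<And>r. ((\<lambda>r. pi * r\<^sup>2 / 2) has_real_derivative pi * r) (at r)"
      by (auto intro!: derivative_eq_intros)
    consider "x < 0" | "0 \<le> x" "x < 1" | "1 \<le> x" by linarith
    then show ?thesis
    proof cases
      case 1
      have "?H \<inter> {z. x < norm z} = ?H" proof -
        have "x < norm z" for z :: "real\<times>real" using 1 norm_ge_zero[of z] by linarith
        then show ?thesis by auto
      qed
      then have L: "emeasure lborel (?H \<inter> {z. x < norm z}) = ennreal (pi / 2)" using half_disk_meas by simp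
      have "(\<lambda>r. ?g r * indicator {x<..} r) = (\<lambda>r. ennreal (pi * r) * indicator {0..1} r)"
        using 1 by (auto simp: indicator_def fun_eq_iff)
      moreover have "(\<integral>\<^sup>+ r. ennreal (pi * r) * indicator {0..1} r \<partial>lborel) = ennreal (pi * 1\<^sup>2 / 2 - pi * 0\<^sup>2 / 2)"
        by (rule nnFTC[OF _ d1]) (auto intro!: continuous_intros)
      ultimately show ?thesis unfolding E R L by simp
    next
      case 2
      have sub: "cball 0 x \<inter> {z. 0 < snd z} \<subseteq> ?H" using 2 unfolding half_disk_eq by auto
      have "?H \<inter> {z. x < norm z} = ?H - (cball 0 x \<inter> {z. 0 < snd z})" unfolding half_disk_eq by auto
      moreover have "emeasure lborel (?H - (cball 0 x \<inter> {z. 0 < snd z})) = ennreal (pi / 2) - ennreal (pi * x\<^sup>2 / 2)"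
      proof (subst emeasure_Diff)
        show "emeasure lborel (cball 0 x \<inter> {z::real\<times>real. 0 < snd z}) \<noteq> \<infinity>" using half_cball[of x] 2 by simp
        have "open {z::real\<times>real. 0 < snd z}" by (intro open_Collect_less continuous_intros)
        then show "cball 0 x \<inter> {z::real\<times>real. 0 < snd z} \<in> sets lborel" by simp
      qed (use Hs sub half_disk_meas half_cball[of x] 2 in auto)
      ultimately have L: "emeasure lborel (?H \<inter> {z. x < norm z}) = ennreal (pi / 2 - pi * x\<^sup>2 / 2)"
        using 2 by (simp add: ennreal_minus)
      have ae: "AE r in lborel. ?g r * indicator {x<..} r = ennreal (pi * r) * indicator {x..1} r"
        using AE_lborel_singleton[of x] by eventually_elim (use 2 in \<open>auto simp: indicator_def\<close>)
      have "(\<integral>\<^sup>+ r. ennreal (pi * r) * indicator {x..1} r \<partial>lborel) = ennreal (pi * 1\<^sup>2 / 2 - pi * x\<^sup>2 / 2)"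
        by (rule nnFTC[OF _ d1]) (use 2 in \<open>auto intro!: continuous_intros\<close>)
      then show ?thesis unfolding E R L using nn_integral_cong_AE[OF ae] by simp
    next
      case 3
      have "?H \<inter> {z. x < norm z} = {}" using 3 unfolding half_disk_eq by auto
      moreover have "(\<lambda>r. ?g r * indicator {x<..} r) = (\<lambda>r. 0)"
        using 3 by (auto simp: indicator_def fun_eq_iff)
      ultimately show ?thesis unfolding E R by simp
    qed
  qed
qed

lemma radial:
  fixes F :: "real \<Rightarrow> ennreal"
  assumes Fm: "F \<in> borel_measurable borel"
  shows "(\<integral>\<^sup>+ z. F (norm z) * indicator half_disk z \<partial>lborel)
       = (\<integral>\<^sup>+ r. ennreal (pi * r) * indicator {0..1} r * F r \<partial>lborel)"
proof -
  have Hs: "half_disk \<in> sets lborel" using half_disk_open by simp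
  have im: "indicator half_disk \<in> borel_measurable (lborel :: (real\<times>real) measure)"
    using Hs by simp
  have Fn: "(\<lambda>z::real\<times>real. F (norm z)) \<in> borel_measurable lborel"
    using Fm by (intro measurable_compose[OF _ Fm]) (simp add: borel_measurable_continuous_onI continuous_on_norm_id)
  have "(\<integral>\<^sup>+ z. F (norm z) * indicator half_disk z \<partial>lborel) =
        integral\<^sup>N (density lborel (indicator half_disk)) (\<lambda>z::real\<times>real. F (norm z))"
    by (subst nn_integral_density[OF im Fn]) (simp add: mult.commute)
  also have "\<dots> = integral\<^sup>N (distr (density lborel (indicator half_disk)) borel (norm :: real\<times>real \<Rightarrow> real)) F"
    by (rule nn_integral_distr[symmetric]) (use Fm in \<open>auto simp: borel_measurable_continuous_onI continuous_on_norm_id\<close>)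
  also have "\<dots> = integral\<^sup>N (density lborel (\<lambda>r. ennreal (pi * r) * indicator {0..1} r)) F"
    by (simp add: radial_key)
  also have "\<dots> = (\<integral>\<^sup>+ r. ennreal (pi * r) * indicator {0..1} r * F r \<partial>lborel)"
    by (rule nn_integral_density) (use Fm in auto)
  finally show ?thesis .
qed


locale prof =
  fixes a m \<gamma> \<beta> :: real
  assumes a_pos: "0 < a" and b_lt: "exp 1 * a < 1"
    and m_pos: "0 < m" and gam: "\<gamma> = m * (ln (1/a) - 1/2)"
    and beta_pos: "0 < \<beta>" and gb1: "\<beta> < \<gamma>" and gb2: "\<gamma> < 2 - \<beta>"
begin

definition "b = exp 1 * a"

definition f :: "real \<Rightarrow> real" where
  "f r = (if r \<le> a then 1 else if r \<le> b then 1 - m/2 * (ln (r/a))\<^sup>2 else 1 - \<gamma> + m * ln (1/r))"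

definition f' :: "real \<Rightarrow> real" where
  "f' r = (if r \<le> a then 0 else if r \<le> b then - m * ln (r/a) / r else - m / r)"

definition F1 :: "real \<Rightarrow> real" where
  "F1 r = (if r \<le> a then 0 else if r \<le> b then - m * ln (r/a) / r\<^sup>2 else - m / r\<^sup>2)"

lemma b_pos: "0 < b" and a_lt_b: "a < b" and b_lt1: "b < 1"
  using a_pos b_lt by (auto simp: b_def)

lemma ln_ba: "ln (b / a) = 1"
  using a_pos by (simp add: b_def)

lemma ln_inv_b: "ln (1/b) = ln (1/a) - 1"
  using a_pos by (simp add: b_def ln_div ln_mult)

lemma junction: "1 - m/2 * (ln (b/a))\<^sup>2 = 1 - \<gamma> + m * ln (1/b)"
  unfolding ln_ba ln_inv_b gam by (simp add: algebra_simps)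

lemma f_deriv: "(f has_real_derivative f' x) (at x)"
proof -
  have inner: "((\<lambda>r. if r \<le> b then 1 - m/2 * (ln (r/a))\<^sup>2 else 1 - \<gamma> + m * ln (1/r))
       has_real_derivative (if x \<le> b then - m * ln (x/a) / x else - m / x)) (at x)" if "a \<le> x"
  proof (rule deriv_paste)
    have x: "0 < x" using that a_pos by linarith
    show "((\<lambda>r. 1 - m/2 * (ln (r/a))\<^sup>2) has_real_derivative - m * ln (x/a) / x) (at x)"
      using x a_pos by (auto intro!: derivative_eq_intros simp: field_simps power2_eq_square)
    show "((\<lambda>r. 1 - \<gamma> + m * ln (1/r)) has_real_derivative - m / x) (at x)"
      using x by (auto intro!: derivative_eq_intros simp: field_simps power2_eq_square)
    show "x = b \<Longrightarrow> 1 - m/2 * (ln (b/a))\<^sup>2 = 1 - \<gamma> + m * ln (1/b) \<and> - m * ln (x/a) / x = - m / x"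
      using junction ln_ba by simp
  qed
  have "((\<lambda>r. if r \<le> a then 1 else (if r \<le> b then 1 - m/2 * (ln (r/a))\<^sup>2 else 1 - \<gamma> + m * ln (1/r)))
       has_real_derivative (if x \<le> a then 0 else (if x \<le> b then - m * ln (x/a) / x else - m / x))) (at x)"
  proof (rule deriv_paste)
    show "((\<lambda>r. 1) has_real_derivative 0) (at x)" by simp
    show "a \<le> x \<Longrightarrow> ((\<lambda>r. if r \<le> b then 1 - m/2 * (ln (r/a))\<^sup>2 else 1 - \<gamma> + m * ln (1/r))
       has_real_derivative (if x \<le> b then - m * ln (x/a) / x else - m / x)) (at x)" by (rule inner)
    show "x = a \<Longrightarrow> 1 = (if a \<le> b then 1 - m/2 * (ln (a/a))\<^sup>2 else 1 - \<gamma> + m * ln (1/a)) \<and>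
        0 = (if x \<le> b then - m * ln (x/a) / x else - m / x)"
      using a_lt_b a_pos by simp
  qed
  then show ?thesis unfolding f_def[abs_def] f'_def by simp
qed

lemma F1_cont: "isCont F1 x"
proof -
  have inner: "isCont (\<lambda>r. if r \<le> b then - m * ln (r/a) / r\<^sup>2 else - m / r\<^sup>2) x" if "a \<le> x"
  proof (rule cont_paste)
    have x: "0 < x" using that a_pos by linarith
    show "isCont (\<lambda>r. - m * ln (r/a) / r\<^sup>2) x" using x a_pos by (auto intro!: continuous_intros)
    show "isCont (\<lambda>r. - m / r\<^sup>2) x" using x by (auto intro!: continuous_intros)
    show "x = b \<Longrightarrow> - m * ln (b/a) / b\<^sup>2 = - m / b\<^sup>2" using ln_ba by simp
  qed
  have "isCont (\<lambda>r. if r \<le> a then 0 else (if r \<le> b then - m * ln (r/a) / r\<^sup>2 else - m / r\<^sup>2)) x"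
  proof (rule cont_paste)
    show "isCont (\<lambda>r. 0) x" by simp
    show "a \<le> x \<Longrightarrow> isCont (\<lambda>r. if r \<le> b then - m * ln (r/a) / r\<^sup>2 else - m / r\<^sup>2) x" by (rule inner)
    show "x = a \<Longrightarrow> 0 = (if a \<le> b then - m * ln (a/a) / a\<^sup>2 else - m / a\<^sup>2)" using a_lt_b a_pos by simp
  qed
  then show ?thesis unfolding F1_def[abs_def] by simp
qed

lemma f'_F1: "f' r = r * F1 r"
  using a_pos unfolding f'_def F1_def by (auto simp: power2_eq_square field_simps)

lemma f_0: "f 0 = 1" using a_pos by (simp add: f_def)

lemma f_1: "f 1 = 1 - \<gamma>" using a_lt_b b_lt1 a_pos by (simp add: f_def)

lemma ln_inv_a_gt1: "1 < ln (1/a)"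
proof -
  have "exp 1 < 1/a" using b_lt a_pos by (simp add: field_simps)
  then have "ln (exp 1) < ln (1/a)" using a_pos by (subst ln_less_cancel_iff) auto
  then show ?thesis by simp
qed

lemma half_m_le_gam: "m/2 < \<gamma>"
  using ln_inv_a_gt1 m_pos unfolding gam by (simp add: algebra_simps)

lemma regB: "a < r \<Longrightarrow> r \<le> b \<Longrightarrow> 0 < ln (r/a) \<and> ln (r/a) \<le> 1"
proof -
  assume r: "a < r" "r \<le> b"
  have "1 < r/a" using r a_pos by (simp add: field_simps)
  then have "0 < ln (r/a)" by simp
  moreover have "ln (r/a) \<le> ln (b/a)" using r a_pos by (subst ln_le_cancel_iff) (auto simp: divide_right_mono)
  ultimately show ?thesis using ln_ba by simp
qed

lemma regA: "b < r \<Longrightarrow> r \<le> 1 \<Longrightarrow> 0 \<le> ln (1/r) \<and> ln (1/r) \<le> ln (1/a) - 1"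
proof -
  assume r: "b < r" "r \<le> 1"
  have r0: "0 < r" using r b_pos by linarith
  have "0 \<le> ln (1/r)" using r r0 by (simp add: ln_div)
  moreover have "ln (1/r) \<le> ln (1/b)" using r r0 b_pos by (subst ln_le_cancel_iff) (auto simp: field_simps)
  ultimately show ?thesis using ln_inv_b by simp
qed

lemma f_regB: "a < r \<Longrightarrow> r \<le> b \<Longrightarrow> f r = 1 - m/2 * (ln (r/a))\<^sup>2 \<and> f' r = - m * ln (r/a) / r"
  unfolding f_def f'_def by simp

lemma f_regA: "b < r \<Longrightarrow> f r = 1 - \<gamma> + m * ln (1/r) \<and> f' r = - m / r"
  using a_lt_b unfolding f_def f'_def by simp

lemma f_regC: "r \<le> a \<Longrightarrow> f r = 1 \<and> f' r = 0"
  unfolding f_def f'_def by simp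

lemma f_bounds: "r \<le> 1 \<Longrightarrow> 1 - \<gamma> \<le> f r \<and> f r \<le> 1 \<and> (a < r \<longrightarrow> 1 - f r \<ge> m/2 * (min 1 (ln (r/a)))\<^sup>2)"
proof -
  assume r1: "r \<le> 1"
  consider "r \<le> a" | "a < r" "r \<le> b" | "b < r" by linarith
  then show ?thesis
  proof cases
    case 1 then show ?thesis using f_regC[OF 1] gb1 beta_pos by simp
  next
    case 2
    note l = regB[OF 2]
    have e: "f r = 1 - m/2 * (ln (r/a))\<^sup>2" using f_regB[OF 2] by simp
    have sq: "(ln (r/a))\<^sup>2 \<le> 1" using l by (simp add: power_le_one)
    have "m * (ln (r/a))\<^sup>2 \<le> m" using sq m_pos by (simp add: mult_left_le)
    then have "m * (ln (r/a))\<^sup>2 \<le> 2 * \<gamma>" using half_m_le_gam by linarith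
    then show ?thesis using e half_m_le_gam m_pos l by (auto simp: min_def)
  next
    case 3
    note l = regA[OF 3 r1]
    have e: "f r = 1 - \<gamma> + m * ln (1/r)" using f_regA[OF 3] by simp
    have "m * ln (1/r) \<le> m * (ln (1/a) - 1)" using l m_pos by (simp add: mult_left_mono)
    moreover have "m * (ln (1/a) - 1) = \<gamma> - m/2" unfolding gam by (simp add: algebra_simps)
    moreover have "ln (r/a) \<ge> 1"
    proof -
      have "ln (r/a) \<ge> ln (b/a)" using 3 a_pos b_pos by (subst ln_le_cancel_iff) (auto simp: divide_right_mono)
      then show ?thesis using ln_ba by simp
    qed
    ultimately show ?thesis using e l m_pos a_lt_b 3 by (auto simp: min_def)
  qed
qed

lemma uA: "b < r \<Longrightarrow> r \<le> 1 \<Longrightarrow> m/2 \<le> 1 - f r"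
proof -
  assume r: "b < r" "r \<le> 1"
  note l = regA[OF r]
  have e: "f r = 1 - \<gamma> + m * ln (1/r)" using f_regA[OF r(1)] by simp
  have "m * ln (1/r) \<le> m * (ln (1/a) - 1)" using l m_pos by (simp add: mult_left_mono)
  moreover have "m * (ln (1/a) - 1) = \<gamma> - m/2" unfolding gam by (simp add: algebra_simps)
  ultimately show ?thesis using e by linarith
qed

lemma bound1D: "0 \<le> r \<Longrightarrow> r \<le> 1 \<Longrightarrow> (f' r)\<^sup>2 / (1 - (f r)\<^sup>2) \<le> (if r \<le> a then 0 else 2 * m / (\<beta> * r\<^sup>2))"
proof -
  assume r0: "0 \<le> r" and r1: "r \<le> 1"
  have fb: "1 - \<gamma> \<le> f r" "f r \<le> 1" using f_bounds[OF r1] by auto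
  have onep: "\<beta> \<le> 1 + f r" using fb gb2 by linarith
  consider "r \<le> a" | "a < r" "r \<le> b" | "b < r" by linarith
  then show ?thesis
  proof cases
    case 1 then show ?thesis using f_regC[OF 1] by simp
  next
    case 2
    note l = regB[OF 2]
    have rp: "0 < r" using 2 a_pos by linarith
    define lr where "lr = ln (r/a)"
    have lp: "0 < lr" using l lr_def by simp
    have e: "f r = 1 - m/2 * lr\<^sup>2" "f' r = - m * lr / r" using f_regB[OF 2] lr_def by auto
    have Y: "1 - (f r)\<^sup>2 = (m/2 * lr\<^sup>2) * (1 + f r)" unfolding e(1) by (simp add: algebra_simps power2_eq_square)
    have Y0: "0 < (m/2 * lr\<^sup>2) * \<beta>" using m_pos lp beta_pos by simp
    have YY: "(m/2 * lr\<^sup>2) * \<beta> \<le> 1 - (f r)\<^sup>2" unfolding Y using onep m_pos lp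
      by (intro mult_left_mono) auto
    have "(f' r)\<^sup>2 / (1 - (f r)\<^sup>2) \<le> (f' r)\<^sup>2 / ((m/2 * lr\<^sup>2) * \<beta>)"
      by (rule divide_left_mono[OF YY]) (use Y0 YY in auto)
    also have "\<dots> = 2 * m / (\<beta> * r\<^sup>2)" unfolding e using m_pos lp beta_pos rp
      by (simp add: field_simps power2_eq_square)
    finally show ?thesis using 2 by simp
  next
    case 3
    have rp: "0 < r" using 3 b_pos by linarith
    have e: "f' r = - m / r" using f_regA[OF 3] by auto
    have u: "1 - f r \<ge> m/2" using uA[OF 3 r1] by simp
    have Y: "1 - (f r)\<^sup>2 = (1 - f r) * (1 + f r)" by (simp add: algebra_simps power2_eq_square)
    have Y0: "0 < (m/2) * \<beta>" using m_pos beta_pos by simp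
    have YY: "(m/2) * \<beta> \<le> 1 - (f r)\<^sup>2" unfolding Y using onep u m_pos beta_pos
      by (intro mult_mono) auto
    have "(f' r)\<^sup>2 / (1 - (f r)\<^sup>2) \<le> (f' r)\<^sup>2 / ((m/2) * \<beta>)"
      by (rule divide_left_mono[OF YY]) (use Y0 YY in auto)
    also have "\<dots> = 2 * m / (\<beta> * r\<^sup>2)" unfolding e using m_pos beta_pos rp
      by (simp add: field_simps power2_eq_square)
    finally show ?thesis using 3 a_lt_b by simp
  qed
qed

lemma bound2D: "0 \<le> r \<Longrightarrow> r \<le> 1 \<Longrightarrow> (f' r)\<^sup>2 \<le> (if r \<le> a then 0 else m\<^sup>2 / r\<^sup>2)"
proof -
  assume r0: "0 \<le> r" and r1: "r \<le> 1"
  consider "r \<le> a" | "a < r" "r \<le> b" | "b < r" by linarith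
  then show ?thesis
  proof cases
    case 1 then show ?thesis using f_regC[OF 1] by simp
  next
    case 2
    note l = regB[OF 2]
    have rp: "0 < r" using 2 a_pos by linarith
    have e: "(f' r)\<^sup>2 = m\<^sup>2 / r\<^sup>2 * (ln (r/a))\<^sup>2" using f_regB[OF 2]
      by (simp add: power2_eq_square field_simps)
    have "(ln (r/a))\<^sup>2 \<le> 1" using l by (simp add: power_le_one)
    then have "m\<^sup>2 / r\<^sup>2 * (ln (r/a))\<^sup>2 \<le> m\<^sup>2 / r\<^sup>2"
      by (intro mult_left_le) auto
    then show ?thesis using e 2 by simp
  next
    case 3
    then show ?thesis using f_regA[OF 3] a_lt_b by (simp add: power_divide)
  qed
qed

end


lemma cont_leb: "continuous_on UNIV (F :: real\<times>real \<Rightarrow> real) \<Longrightarrow> F \<in> borel_measurable lebesgue"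
  by (rule measurable_completion) (simp add: borel_measurable_continuous_onI)

lemma cont_set_int: "continuous_on UNIV (F :: real\<times>real \<Rightarrow> real) \<Longrightarrow> set_integrable lebesgue half_disk F"
proof -
  assume c: "continuous_on UNIV F"
  have "set_integrable lborel (cball 0 1) F"
    unfolding set_integrable_def by (rule borel_integrable_compact) (use c continuous_on_subset in auto)
  then have si: "set_integrable lborel half_disk F"
    by (rule set_integrable_subset) (auto simp: half_disk_eq half_disk_open[unfolded half_disk_eq])
  have Hs: "half_disk \<in> sets lborel" using half_disk_open by simp
  have m: "(\<lambda>z. indicator half_disk z *\<^sub>R F z) \<in> borel_measurable lborel"
    using Hs c by (intro borel_measurable_scaleR borel_measurable_indicator) (auto simp: borel_measurable_continuous_onI)
  show ?thesis using si m unfolding set_integrable_def by (simp add: integrable_completion)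
qed

context prof begin

definition w :: "real \<times> real \<Rightarrow> real" where "w z = f (norm z)"
definition W1 :: "real \<times> real \<Rightarrow> real" where "W1 z = F1 (norm z) * fst z"
definition W2 :: "real \<times> real \<Rightarrow> real" where "W2 z = F1 (norm z) * snd z"

lemma F1_cont_on: "continuous_on UNIV F1"
  using F1_cont by (simp add: continuous_at_imp_continuous_on)

lemma W1_cont: "continuous_on UNIV W1"
  unfolding W1_def[abs_def]
  by (intro continuous_intros continuous_on_compose2[OF F1_cont_on]) auto

lemma W2_cont: "continuous_on UNIV W2"
  unfolding W2_def[abs_def]
  by (intro continuous_intros continuous_on_compose2[OF F1_cont_on]) auto

lemma w_deriv: "(w has_derivative (\<lambda>h. W1 z * fst h + W2 z * snd h)) (at z)"
proof (cases "z = 0")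
  case True
  have "((\<lambda>_. 1::real) has_derivative (\<lambda>h. 0)) (at z)" by simp
  then have "(w has_derivative (\<lambda>h. 0)) (at z)"
  proof (rule has_derivative_transform_within_open[where s = "ball 0 a"])
    show "open (ball (0::real\<times>real) a)" by simp
    show "z \<in> ball 0 a" using True a_pos by simp
    show "\<And>x. x \<in> ball 0 a \<Longrightarrow> 1 = w x" by (auto simp: w_def f_def)
  qed
  then show ?thesis using True by (simp add: W1_def W2_def)
next
  case False
  have dn: "(norm has_derivative (\<lambda>h. inner h (sgn z))) (at z)"
    using has_derivative_norm[OF False] unfolding gderiv_def .
  have "((\<lambda>x. f (norm x)) has_derivative (\<lambda>h. inner h (sgn z) * f' (norm z))) (at z)"
    by (rule DERIV_compose_FDERIV[OF f_deriv dn])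
  then show ?thesis unfolding w_def[abs_def]
  proof (rule has_derivative_eq_rhs)
    obtain x y where z: "z = (x, y)" by (cases z)
    have nz: "norm z \<noteq> 0" using False by simp
    show "(\<lambda>h. inner h (sgn z) * f' (norm z)) = (\<lambda>h. W1 z * fst h + W2 z * snd h)"
      using nz unfolding f'_F1 W1_def W2_def sgn_div_norm z
      by (auto simp: fun_eq_iff inner_Pair field_simps)
  qed
qed

lemma w_cont: "continuous_on UNIV w"
  using has_derivative_continuous[OF w_deriv] by (simp add: continuous_on_eq_continuous_at)

definition \<mu> :: "real \<Rightarrow> real" where "\<mu> x = w (x, 0)"
definition g :: "real \<Rightarrow> real" where "g x = W1 (x, 0)"

lemma \<mu>_eq: "\<mu> x = f \<bar>x\<bar>" by (simp add: \<mu>_def w_def)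

lemma w_circle: "w (cos t, sin t) = 1 - \<gamma>"
  by (simp add: w_def norm_pair_eq f_1)

lemma W12_mu_mem: "(w, W1, W2) \<in> W12_mu \<gamma> \<mu>"
  unfolding W12_mu_def
proof (intro CollectI case_prodI conjI)
  show "W12_2d half_disk w W1 W2"
    unfolding W12_2d_def
  proof (intro conjI allI impI)
    show "w \<in> borel_measurable lebesgue" by (rule cont_leb[OF w_cont])
    show "W1 \<in> borel_measurable lebesgue" by (rule cont_leb[OF W1_cont])
    show "W2 \<in> borel_measurable lebesgue" by (rule cont_leb[OF W2_cont])
    show "set_integrable lebesgue half_disk (\<lambda>z. (w z)\<^sup>2)"
      by (rule cont_set_int) (intro continuous_intros w_cont)
    show "set_integrable lebesgue half_disk (\<lambda>z. (W1 z)\<^sup>2)"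
      by (rule cont_set_int) (intro continuous_intros W1_cont)
    show "set_integrable lebesgue half_disk (\<lambda>z. (W2 z)\<^sup>2)"
      by (rule cont_set_int) (intro continuous_intros W2_cont)
    fix \<phi> p1 p2 assume tf: "test_fun half_disk \<phi> p1 p2"
    note wd = weak_deriv[OF w_deriv W1_cont W2_cont tf]
    show "(LINT z:half_disk|lebesgue. w z * p1 z) = - (LINT z:half_disk|lebesgue. W1 z * \<phi> z)"
      using wd by blast
    show "(LINT z:half_disk|lebesgue. w z * p2 z) = - (LINT z:half_disk|lebesgue. W2 z * \<phi> z)"
      using wd by blast
  qed
  show "AE x in lborel. x \<in> {-1<..<1} \<longrightarrow> ((\<lambda>t. w (x, t)) \<longlongrightarrow> \<mu> x) (at_right 0)"
  proof (rule AE_I2, intro impI)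
    fix x :: real
    have "continuous_on UNIV (\<lambda>t. w (x, t))"
      by (rule continuous_on_compose2[OF w_cont]) (auto intro!: continuous_intros)
    then have "((\<lambda>t. w (x, t)) \<longlongrightarrow> w (x, 0)) (at 0)"
      by (simp add: continuous_on_eq_continuous_at isCont_def)
    then show "((\<lambda>t. w (x, t)) \<longlongrightarrow> \<mu> x) (at_right 0)"
      unfolding \<mu>_def by (simp add: filterlim_at_split)
  qed
  show "AE \<theta> in lborel. \<theta> \<in> {0<..<pi} \<longrightarrow>
        (\<exists>L. ((\<lambda>r. w (r * cos \<theta>, r * sin \<theta>)) \<longlongrightarrow> L) (at_left 1) \<and> L \<le> 1 - \<gamma>)"
  proof (rule AE_I2, intro impI exI conjI)
    fix t :: real
    have "continuous_on UNIV (\<lambda>r. w (r * cos t, r * sin t))"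
      by (rule continuous_on_compose2[OF w_cont]) (auto intro!: continuous_intros)
    then have "isCont (\<lambda>r. w (r * cos t, r * sin t)) 1"
      using continuous_on_eq_continuous_at open_UNIV UNIV_I by blast
    then have "((\<lambda>r. w (r * cos t, r * sin t)) \<longlongrightarrow> w (cos t, sin t)) (at 1)"
      by (simp add: isCont_def)
    then show "((\<lambda>r. w (r * cos t, r * sin t)) \<longlongrightarrow> 1 - \<gamma>) (at_left 1)"
      using w_circle by (simp add: filterlim_at_split)
  qed simp
qed

lemma energy2D: "(\<integral>\<^sup>+ z\<in>half_disk. ennreal ((W1 z)\<^sup>2 + (W2 z)\<^sup>2) \<partial>lebesgue) \<le> ennreal (pi * m\<^sup>2 * ln (1/a))"
proof -
  have eqi: "(W1 z)\<^sup>2 + (W2 z)\<^sup>2 = (f' (norm z))\<^sup>2" for z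
  proof -
    obtain x y where z: "z = (x, y)" by (cases z)
    show ?thesis unfolding z W1_def W2_def f'_F1 norm_pair_eq
      by (simp add: power_mult_distrib algebra_simps)
  qed
  have fm: "(\<lambda>r. ennreal ((f' r)\<^sup>2)) \<in> borel_measurable borel"
  proof -
    have "continuous_on UNIV (\<lambda>r. (f' r)\<^sup>2)" unfolding f'_F1
      by (intro continuous_intros F1_cont_on)
    then show ?thesis by (intro measurable_compose[OF _ measurable_ennreal]) (simp add: borel_measurable_continuous_onI)
  qed
  have "(\<integral>\<^sup>+ z\<in>half_disk. ennreal ((W1 z)\<^sup>2 + (W2 z)\<^sup>2) \<partial>lebesgue)
      = (\<integral>\<^sup>+ z. ennreal ((f' (norm z))\<^sup>2) * indicator half_disk z \<partial>lborel)"
    by (simp add: nn_integral_completion eqi)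
  also have "\<dots> = (\<integral>\<^sup>+ r. ennreal (pi * r) * indicator {0..1} r * ennreal ((f' r)\<^sup>2) \<partial>lborel)"
    by (rule radial[OF fm])
  also have "\<dots> \<le> (\<integral>\<^sup>+ r. ennreal (pi * m\<^sup>2 / r) * indicator {a..1} r \<partial>lborel)"
  proof (rule nn_integral_mono)
    fix r :: real
    show "ennreal (pi * r) * indicator {0..1} r * ennreal ((f' r)\<^sup>2) \<le> ennreal (pi * m\<^sup>2 / r) * indicator {a..1} r"
    proof (cases "r \<in> {0..1}")
      case True
      then have B: "(f' r)\<^sup>2 \<le> (if r \<le> a then 0 else m\<^sup>2 / r\<^sup>2)" using bound2D by auto
      show ?thesis
      proof (cases "r \<le> a")
        case True then show ?thesis using f_regC[OF True] by simp
      next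
        case False
        then have ra: "r \<in> {a..1}" "0 < r" using \<open>r \<in> {0..1}\<close> a_pos by auto
        have "pi * r * (f' r)\<^sup>2 \<le> pi * r * (m\<^sup>2 / r\<^sup>2)"
          using B False ra by (intro mult_left_mono) auto
        also have "\<dots> = pi * m\<^sup>2 / r" using ra by (simp add: power2_eq_square field_simps)
        finally have "pi * r * (f' r)\<^sup>2 \<le> pi * m\<^sup>2 / r" .
        then show ?thesis using True ra
          by (simp add: ennreal_mult'[symmetric] ennreal_leI)
      qed
    qed (simp)
  qed
  also have "\<dots> = ennreal (pi * m\<^sup>2 * ln 1 - pi * m\<^sup>2 * ln a)"
  proof (rule nnFTC)
    show "a \<le> 1" using a_lt_b b_lt1 by simp
    show "\<And>x. a \<le> x \<Longrightarrow> x \<le> 1 \<Longrightarrow> ((\<lambda>x. pi * m\<^sup>2 * ln x) has_real_derivative pi * m\<^sup>2 / x) (at x)"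
      using a_pos by (auto intro!: derivative_eq_intros)
    show "continuous_on {a..1} (\<lambda>x. pi * m\<^sup>2 / x)" using a_pos by (auto intro!: continuous_intros)
    show "\<And>x. a \<le> x \<Longrightarrow> x \<le> 1 \<Longrightarrow> 0 \<le> pi * m\<^sup>2 / x" using a_pos by auto
  qed
  also have "pi * m\<^sup>2 * ln 1 - pi * m\<^sup>2 * ln a = pi * m\<^sup>2 * ln (1/a)"
    using a_pos by (simp add: ln_div)
  finally show ?thesis .
qed

end


context prof begin

lemma g_eq: "g x = x * F1 \<bar>x\<bar>" by (simp add: g_def W1_def)

lemma g_cont: "continuous_on UNIV g"
  unfolding g_def[abs_def] by (rule continuous_on_compose2[OF W1_cont]) (auto intro!: continuous_intros)

lemma \<mu>_deriv: "(\<mu> has_real_derivative g x) (at x)"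
proof -
  have "((\<lambda>x. (x, 0::real)) has_derivative (\<lambda>k. (k, 0))) (at x)"
    by (auto intro!: derivative_eq_intros)
  from has_derivative_compose[OF this w_deriv]
  have "(\<mu> has_derivative (\<lambda>k. k * g x)) (at x)"
    unfolding \<mu>_def[abs_def] g_def by (simp add: algebra_simps)
  then show ?thesis by (simp add: has_field_derivative_def mult_commute_abs)
qed

lemma W12_int: "W12_interval \<mu> g"
  unfolding W12_interval_def
proof (intro conjI ballI)
  show "g \<in> borel_measurable lborel" using g_cont by (simp add: borel_measurable_continuous_onI)
  show "set_integrable lborel {-1..1} g"
    by (rule borel_integrable_atLeastAtMost') (use g_cont continuous_on_subset in blast)
  show "set_integrable lborel {-1..1} (\<lambda>x. (g x)\<^sup>2)"
    by (rule borel_integrable_atLeastAtMost') (use g_cont in \<open>auto intro!: continuous_intros intro: continuous_on_subset\<close>)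
  fix x :: real assume x: "x \<in> {-1..1}"
  have "(LBINT t=ereal (-1)..ereal x. g t) = \<mu> x - \<mu> (-1)"
  proof (rule interval_integral_FTC_finite)
    show "continuous_on {min (-1) x..max (-1) x} g" using g_cont continuous_on_subset by blast
    show "(\<mu> has_vector_derivative g t) (at t within {min (- 1) x..max (- 1) x})" for t
      using \<mu>_deriv[of t] by (simp add: has_real_derivative_iff_has_vector_derivative[symmetric] has_field_derivative_at_within)
  qed
  moreover have e: "(- 1 :: ereal) = ereal (- 1)" by (simp add: one_ereal_def)
  ultimately show "\<mu> x = \<mu> (-1) + (LBINT t=-1..x. g t)" by (simp only: e)
qed

lemma M_mem: "\<mu> \<in> M_gamma \<gamma>"
  unfolding M_gamma_def
proof (intro CollectI conjI ballI exI)
  show "W12_interval \<mu> g" by (rule W12_int)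
  show "\<mu> 0 = 1" using f_0 by (simp add: \<mu>_eq)
  show "\<mu> (-1) \<le> 1 - \<gamma>" "\<mu> 1 \<le> 1 - \<gamma>" using f_1 by (simp_all add: \<mu>_eq)
  fix x :: real assume "x \<in> {-1..1}"
  then have "\<bar>x\<bar> \<le> 1" by auto
  then show "\<bar>\<mu> x\<bar> \<le> 1" using f_bounds[of "\<bar>x\<bar>"] gb2 beta_pos unfolding \<mu>_eq by auto
qed

lemma energy1D: "(\<integral>\<^sup>+ x\<in>{-1<..<1}. ennreal ((g x)\<^sup>2 / (1 - (\<mu> x)\<^sup>2)) \<partial>lborel) \<le> ennreal (4 * m / (\<beta> * a))"
proof -
  define K where "K = 2 * m / \<beta>"
  have Kp: "0 < K" using m_pos beta_pos by (simp add: K_def)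
  have "(\<integral>\<^sup>+ x\<in>{-1<..<1}. ennreal ((g x)\<^sup>2 / (1 - (\<mu> x)\<^sup>2)) \<partial>lborel)
     \<le> (\<integral>\<^sup>+ x. ennreal (K / x\<^sup>2) * indicator {-1..-a} x + ennreal (K / x\<^sup>2) * indicator {a..1} x \<partial>lborel)"
  proof (rule nn_integral_mono)
    fix x :: real
    show "ennreal ((g x)\<^sup>2 / (1 - (\<mu> x)\<^sup>2)) * indicator {-1<..<1} x
        \<le> ennreal (K / x\<^sup>2) * indicator {-1..-a} x + ennreal (K / x\<^sup>2) * indicator {a..1} x"
    proof (cases "x \<in> {-1<..<1}")
      case True
      have ax: "\<bar>x\<bar> \<le> 1" using True by auto
      have ge: "(g x)\<^sup>2 = (f' \<bar>x\<bar>)\<^sup>2" unfolding g_eq f'_F1 by (simp add: power_mult_distrib)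
      have B: "(g x)\<^sup>2 / (1 - (\<mu> x)\<^sup>2) \<le> (if \<bar>x\<bar> \<le> a then 0 else K / x\<^sup>2)"
        using bound1D[of "\<bar>x\<bar>"] ax unfolding ge \<mu>_eq K_def power2_abs by (cases "\<bar>x\<bar> \<le> a") (auto simp: divide_divide_eq_left)
      show ?thesis
      proof (cases "\<bar>x\<bar> \<le> a")
        case True then show ?thesis using B by (simp add: ennreal_neg)
      next
        case False
        then have "x \<in> {-1..-a} \<or> x \<in> {a..1}" using ax by auto
        then show ?thesis using B False True a_pos
          by (auto simp: indicator_def ennreal_leI)
      qed
    qed simp
  qed
  also have "\<dots> = (\<integral>\<^sup>+ x. ennreal (K / x\<^sup>2) * indicator {-1..-a} x \<partial>lborel) + (\<integral>\<^sup>+ x. ennreal (K / x\<^sup>2) * indicator {a..1} x \<partial>lborel)"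
    by (rule nn_integral_add) auto
  also have "(\<integral>\<^sup>+ x. ennreal (K / x\<^sup>2) * indicator {-1..-a} x \<partial>lborel) = ennreal ((- K / (-a)) - (- K / (-1)))"
  proof (rule nnFTC)
    show "-1 \<le> -a" using a_lt_b b_lt1 by simp
    show "\<And>x. -1 \<le> x \<Longrightarrow> x \<le> -a \<Longrightarrow> ((\<lambda>x. - K / x) has_real_derivative K / x\<^sup>2) (at x)"
      using a_pos by (auto intro!: derivative_eq_intros simp: power2_eq_square)
    show "continuous_on {-1..-a} (\<lambda>x. K / x\<^sup>2)" using a_pos by (auto intro!: continuous_intros)
    show "\<And>x. -1 \<le> x \<Longrightarrow> x \<le> -a \<Longrightarrow> 0 \<le> K / x\<^sup>2" using Kp by auto
  qed
  also have "(\<integral>\<^sup>+ x. ennreal (K / x\<^sup>2) * indicator {a..1} x \<partial>lborel) = ennreal ((- K / 1) - (- K / a))"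
  proof (rule nnFTC)
    show "a \<le> 1" using a_lt_b b_lt1 by simp
    show "\<And>x. a \<le> x \<Longrightarrow> x \<le> 1 \<Longrightarrow> ((\<lambda>x. - K / x) has_real_derivative K / x\<^sup>2) (at x)"
      using a_pos by (auto intro!: derivative_eq_intros simp: power2_eq_square)
    show "continuous_on {a..1} (\<lambda>x. K / x\<^sup>2)" using a_pos by (auto intro!: continuous_intros)
    show "\<And>x. a \<le> x \<Longrightarrow> x \<le> 1 \<Longrightarrow> 0 \<le> K / x\<^sup>2" using Kp by auto
  qed
  also have "ennreal ((- K / (-a)) - (- K / (-1))) + ennreal ((- K / 1) - (- K / a)) = ennreal (2 * K / a - 2 * K)"
  proof -
    have "0 \<le> K / a - K" using Kp a_pos a_lt_b b_lt1 by (simp add: field_simps)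
    then show ?thesis by (simp add: ennreal_plus[symmetric] del: ennreal_plus)
  qed
  also have "\<dots> \<le> ennreal (4 * m / (\<beta> * a))"
    by (rule ennreal_leI) (use Kp m_pos beta_pos a_pos in \<open>simp add: K_def field_simps\<close>)
  finally show ?thesis .
qed

lemma energy_bound:
  assumes eps: "0 < \<epsilon>"
  shows "energy \<gamma> \<epsilon> \<mu> \<le> ennreal (2 * \<epsilon> * m / (\<beta> * a) + pi * m\<^sup>2 * ln (1/a) / 2)"
proof -
  have I1: "(INF g\<in>{g. W12_interval \<mu> g}. \<integral>\<^sup>+ x\<in>{-1<..<1}. ennreal ((g x)\<^sup>2 / (1 - (\<mu> x)\<^sup>2)) \<partial>lborel)
      \<le> ennreal (4 * m / (\<beta> * a))"
    by (rule INF_lower2[of g]) (use W12_int energy1D in auto)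
  have I2: "(INF (w, G1, G2)\<in>W12_mu \<gamma> \<mu>. \<integral>\<^sup>+ z\<in>half_disk. ennreal ((G1 z)\<^sup>2 + (G2 z)\<^sup>2) \<partial>lebesgue)
      \<le> ennreal (pi * m\<^sup>2 * ln (1/a))"
    by (rule INF_lower2[OF W12_mu_mem]) (use energy2D in auto)
  have "energy \<gamma> \<epsilon> \<mu> \<le> ennreal (\<epsilon>/2) * ennreal (4 * m / (\<beta> * a)) + ennreal (1/2) * ennreal (pi * m\<^sup>2 * ln (1/a))"
    unfolding energy_def by (intro add_mono mult_left_mono I1 I2) auto
  also have "\<dots> = ennreal (2 * \<epsilon> * m / (\<beta> * a) + pi * m\<^sup>2 * ln (1/a) / 2)"
  proof -
    have l: "0 \<le> ln (1/a)" using ln_inv_a_gt1 by simp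
    have p1: "0 \<le> 4 * m / (\<beta> * a)" using m_pos beta_pos a_pos by simp
    have p2: "0 \<le> pi * m\<^sup>2 * ln (1/a)" using l by simp
    have "ennreal (\<epsilon>/2) * ennreal (4 * m / (\<beta> * a)) = ennreal (\<epsilon>/2 * (4 * m / (\<beta> * a)))"
      by (rule ennreal_mult[symmetric]) (use eps p1 in auto)
    moreover have "ennreal (1/2) * ennreal (pi * m\<^sup>2 * ln (1/a)) = ennreal (1/2 * (pi * m\<^sup>2 * ln (1/a)))"
      by (rule ennreal_mult[symmetric]) (use p2 in auto)
    moreover have "ennreal (\<epsilon>/2 * (4 * m / (\<beta> * a))) + ennreal (1/2 * (pi * m\<^sup>2 * ln (1/a)))
        = ennreal (\<epsilon>/2 * (4 * m / (\<beta> * a)) + 1/2 * (pi * m\<^sup>2 * ln (1/a)))"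
      by (rule ennreal_plus[symmetric]) (use eps p1 p2 m_pos beta_pos a_pos in auto)
    moreover have "\<epsilon>/2 * (4 * m / (\<beta> * a)) + 1/2 * (pi * m\<^sup>2 * ln (1/a)) = 2 * \<epsilon> * m / (\<beta> * a) + pi * m\<^sup>2 * ln (1/a) / 2"
      by simp
    ultimately show ?thesis by metis
  qed
  finally show ?thesis .
qed

end


lemma arith1:
  fixes L \<gamma> :: real assumes L: "0 < L"
  shows "pi * (\<gamma> / (L + 1/2))\<^sup>2 * (1 + L) / 2 \<le> pi * \<gamma>\<^sup>2 / (2 * L)"
proof -
  have "(1 + L) / (L + 1/2)\<^sup>2 \<le> 1 / L"
  proof -
    have I: "(1 + L) * L \<le> (L + 1/2)\<^sup>2" by (simp add: power2_eq_square algebra_simps)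
    have D: "0 < (L + 1/2)\<^sup>2 * L" using L by simp
    have "(1 + L) / (L + 1/2)\<^sup>2 = ((1 + L) * L) / ((L + 1/2)\<^sup>2 * L)" using L by simp
    also have "\<dots> \<le> (L + 1/2)\<^sup>2 / ((L + 1/2)\<^sup>2 * L)" by (rule divide_right_mono[OF I]) (use D in simp)
    also have "\<dots> = 1 / L" using L by simp
    finally show ?thesis .
  qed
  then have "\<gamma>\<^sup>2 * ((1 + L) / (L + 1/2)\<^sup>2) \<le> \<gamma>\<^sup>2 * (1 / L)" by (rule mult_left_mono) simp
  then have "pi / 2 * (\<gamma>\<^sup>2 * ((1 + L) / (L + 1/2)\<^sup>2)) \<le> pi / 2 * (\<gamma>\<^sup>2 * (1 / L))" by (rule mult_left_mono) simp
  then show ?thesis by (simp add: power_divide field_simps)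
qed

lemma tL:
  fixes \<epsilon> :: real assumes e: "0 < \<epsilon>" "\<epsilon> \<le> 1/2"
  shows "0 < ln (1/\<epsilon>)" "0 < \<epsilon> * ln (1/\<epsilon>)" "\<epsilon> * ln (1/\<epsilon>) < 1"
    "ln (1 / (\<epsilon> * ln (1/\<epsilon>))) \<le> 4 * ln (1/\<epsilon>)"
proof -
  define t where "t = ln (1/\<epsilon>)"
  have ie: "2 \<le> 1/\<epsilon>" using e by (simp add: field_simps)
  have l2: "1/2 \<le> ln (2::real)"
  proof -
    have "ln (1/2::real) \<le> 1/2 - 1" by (rule ln_le_minus_one) auto
    then show ?thesis by (simp add: ln_div)
  qed
  have "ln 2 \<le> t" unfolding t_def using ie e by (subst ln_le_cancel_iff) auto
  then have t2: "1/2 \<le> t" using l2 by linarith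
  then show "0 < ln (1/\<epsilon>)" unfolding t_def by simp
  have tp: "0 < t" using t2 by simp
  show "0 < \<epsilon> * ln (1/\<epsilon>)" using e tp t_def by simp
  have "t < 1/\<epsilon>" unfolding t_def by (rule ln_less_self) (use e in simp)
  then show "\<epsilon> * ln (1/\<epsilon>) < 1" using e unfolding t_def[symmetric] by (simp add: field_simps)
  have a1: "ln (1/(\<epsilon>*t)) = ln 1 - ln (\<epsilon>*t)" by (rule ln_divide_pos) (use e tp in auto)
  have a2: "ln (\<epsilon>*t) = ln \<epsilon> + ln t" using e tp by (simp add: ln_mult)
  have a3: "t = ln 1 - ln \<epsilon>" unfolding t_def by (rule ln_divide_pos) (use e in auto)
  have eqL: "ln (1 / (\<epsilon> * t)) = t - ln t" using a1 a2 a3 by simp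
  have "ln (1/t) \<le> 1/t - 1" by (rule ln_le_minus_one) (use tp in simp)
  then have "- ln t \<le> 1/t - 1" using tp by (simp add: ln_div)
  moreover have "1/t \<le> 2" using t2 tp by (simp add: field_simps)
  ultimately show "ln (1 / (\<epsilon> * ln (1/\<epsilon>))) \<le> 4 * ln (1/\<epsilon>)"
    unfolding t_def[symmetric] eqL using t2 by linarith
qed


theorem proposition4p2:
  fixes \<beta> :: real
  assumes "0 < \<beta>" and "\<beta> < 1"
  shows "\<exists>C0 > 0. \<forall>\<gamma> \<epsilon>. \<beta> < \<gamma> \<and> \<gamma> < 2 - \<beta> \<and> 0 < \<epsilon> \<and> \<epsilon> \<le> 1/2 \<longrightarrow>
           (let \<delta> = \<epsilon> * ln (1 / \<epsilon>) in
             (INF \<mu>\<in>M_gamma \<gamma>. energy \<gamma> \<epsilon> \<mu>)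
               \<le> ennreal (pi * \<gamma>\<^sup>2 / (2 * ln (1 / \<delta>)) + C0 / (ln (1 / \<delta>))\<^sup>2))"
proof -
  define C0 where "C0 = 16 * exp 1 / \<beta>"
  have C0p: "C0 > 0" using assms by (simp add: C0_def)
  show ?thesis
  proof (intro exI[of _ C0] conjI allI impI C0p)
    fix \<gamma> \<epsilon> :: real
    assume H: "\<beta> < \<gamma> \<and> \<gamma> < 2 - \<beta> \<and> 0 < \<epsilon> \<and> \<epsilon> \<le> 1/2"
    then have gb1: "\<beta> < \<gamma>" and gb2: "\<gamma> < 2 - \<beta>" and e0: "0 < \<epsilon>" and e1: "\<epsilon> \<le> 1/2" by auto
    define t where "t = ln (1/\<epsilon>)"
    define \<delta> where "\<delta> = \<epsilon> * t"
    define L where "L = ln (1/\<delta>)"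
    have tp: "0 < t" and dp: "0 < \<delta>" and d1: "\<delta> < 1" and L4: "L \<le> 4 * t"
      using tL[OF e0 e1] unfolding t_def \<delta>_def L_def by auto
    have Lp: "0 < L" unfolding L_def using dp d1 by (simp add: field_simps)
    define a where "a = \<delta> / exp 1"
    define m where "m = \<gamma> / (L + 1/2)"
    have ap: "0 < a" using dp by (simp add: a_def)
    have lna: "ln (1/a) = 1 + L"
    proof -
      have "1/a = exp 1 / \<delta>" by (simp add: a_def)
      then have "ln (1/a) = ln (exp 1) - ln \<delta>" using dp by (simp add: ln_divide_pos)
      moreover have "L = ln 1 - ln \<delta>" unfolding L_def by (rule ln_divide_pos) (use dp in auto)
      ultimately show ?thesis by simp
    qed
    have gp: "0 < \<gamma>" using gb1 assms by linarith
    have mp: "0 < m" using gp Lp by (simp add: m_def)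
    interpret P: prof a m \<gamma> \<beta>
    proof
      show "0 < a" by (rule ap)
      show "exp 1 * a < 1" using d1 by (simp add: a_def)
      show "0 < m" by (rule mp)
      show "\<gamma> = m * (ln (1/a) - 1/2)" unfolding lna m_def using Lp by (simp add: field_simps)
    qed (use assms gb1 gb2 in auto)
    have E: "energy \<gamma> \<epsilon> P.\<mu> \<le> ennreal (2 * \<epsilon> * m / (\<beta> * a) + pi * m\<^sup>2 * ln (1/a) / 2)"
      by (rule P.energy_bound[OF e0])
    have R: "2 * \<epsilon> * m / (\<beta> * a) + pi * m\<^sup>2 * ln (1/a) / 2 \<le> pi * \<gamma>\<^sup>2 / (2 * L) + C0 / L\<^sup>2"
    proof -
      have p2: "pi * m\<^sup>2 * ln (1/a) / 2 \<le> pi * \<gamma>\<^sup>2 / (2 * L)"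
        unfolding lna m_def using arith1[OF Lp, of \<gamma>] by simp
      have m_le: "m \<le> 2 / L"
      proof -
        have "m \<le> \<gamma> / L" unfolding m_def using gp Lp by (intro divide_left_mono) auto
        also have "\<dots> \<le> 2 / L" using gb2 assms Lp by (intro divide_right_mono) auto
        finally show ?thesis .
      qed
      have it: "1/t \<le> 4/L" using L4 tp Lp by (simp add: field_simps)
      have eq1: "2 * \<epsilon> * m / (\<beta> * a) = (2 * exp 1 / \<beta>) * (m * (1/t))"
        using e0 tp assms by (simp add: a_def \<delta>_def field_simps)
      have "m * (1/t) \<le> (2/L) * (4/L)" by (rule mult_mono[OF m_le it]) (use Lp tp in auto)
      then have "(2 * exp 1 / \<beta>) * (m * (1/t)) \<le> (2 * exp 1 / \<beta>) * ((2/L) * (4/L))"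
        by (rule mult_left_mono) (use assms in auto)
      also have "(2 * exp 1 / \<beta>) * ((2/L) * (4/L)) = C0 / L\<^sup>2"
        unfolding C0_def using Lp by (simp add: field_simps power2_eq_square)
      finally show ?thesis using p2 eq1 by linarith
    qed
    have "(INF \<mu>\<in>M_gamma \<gamma>. energy \<gamma> \<epsilon> \<mu>) \<le> energy \<gamma> \<epsilon> P.\<mu>"
      by (rule INF_lower[OF P.M_mem])
    also have "\<dots> \<le> ennreal (pi * \<gamma>\<^sup>2 / (2 * L) + C0 / L\<^sup>2)"
      using E R by (meson ennreal_leI order_trans)
    finally show "let \<delta> = \<epsilon> * ln (1 / \<epsilon>) in
             (INF \<mu>\<in>M_gamma \<gamma>. energy \<gamma> \<epsilon> \<mu>)
               \<le> ennreal (pi * \<gamma>\<^sup>2 / (2 * ln (1 / \<delta>)) + C0 / (ln (1 / \<delta>))\<^sup>2)"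
      unfolding Let_def L_def \<delta>_def t_def .
  qed
qed


end
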